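(* Let $G$ be a finite group and $\rho:G\to\mathrm{GL}_d(\mathbb{C})$ a mixable irreducible representation. Then $\rho$ is potentially mixable, i.e. there is $a\in G$ such that $-1$ is an eigenvalue of $\rho(a)$. Furthermore, if $(g_1,p_1),\dots,(g_k,p_k)$ is a mixing sequence of $\rho$ of minimal length, then $p_1=p_k=\tfrac12$ and $g_1$ and $g_k$ have even order in $G$; moreover $g_1$ and $g_k$ can be replaced by elements of order a power of $2$ (keeping a mixing sequence of the same length with $p_1=p_k=\tfrac12$).
   Context: An irreducible representation $\rho:G\to\mathrm{GL}_d(\mathbb{C})$ of a finite group $G$ is mixable if there exist $g_1,\dots,g_k\in G$ and $p_1,\dots,p_k\in[0,1]$ with $\prod_{i=1}^k\big((1-p_i)I+p_i\rho(g_i)\big)=0$ (product taken in the order $i=1,\dots,k$); $(g_1,p_1),\dots,(g_k,p_k)$ is then called a mixing sequence of $\rho$, of length $k$. *)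

theory Defs
  imports "HOL-Algebra.Multiplicative_Group" "Jordan_Normal_Form.Char_Poly"
begin

definition is_rep :: "('g, 'b) monoid_scheme \<Rightarrow> nat \<Rightarrow> ('g \<Rightarrow> complex mat) \<Rightarrow> bool" where
  "is_rep G d \<rho> \<longleftrightarrow>
     (\<forall>g\<in>carrier G. \<rho> g \<in> carrier_mat d d \<and> invertible_mat (\<rho> g)) \<and>
     (\<forall>g\<in>carrier G. \<forall>h\<in>carrier G. \<rho> (g \<otimes>\<^bsub>G\<^esub> h) = \<rho> g * \<rho> h)"

definition is_subspace :: "nat \<Rightarrow> complex vec set \<Rightarrow> bool" where
  "is_subspace d W \<longleftrightarrow> W \<subseteq> carrier_vec d \<and> 0\<^sub>v d \<in> W \<and>
     (\<forall>v\<in>W. \<forall>w\<in>W. v + w \<in> W) \<and> (\<forall>c. \<forall>v\<in>W. c \<cdot>\<^sub>v v \<in> W)"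

definition irreducible_rep :: "('g, 'b) monoid_scheme \<Rightarrow> nat \<Rightarrow> ('g \<Rightarrow> complex mat) \<Rightarrow> bool" where
  "irreducible_rep G d \<rho> \<longleftrightarrow> is_rep G d \<rho> \<and> d > 0 \<and>
     (\<forall>W. is_subspace d W \<and> (\<forall>g\<in>carrier G. \<forall>w\<in>W. \<rho> g *\<^sub>v w \<in> W)
          \<longrightarrow> W = {0\<^sub>v d} \<or> W = carrier_vec d)"

definition mix_factor :: "nat \<Rightarrow> ('g \<Rightarrow> complex mat) \<Rightarrow> 'g \<times> real \<Rightarrow> complex mat" where
  "mix_factor d \<rho> gp = (complex_of_real (1 - snd gp)) \<cdot>\<^sub>m 1\<^sub>m d + (complex_of_real (snd gp)) \<cdot>\<^sub>m \<rho> (fst gp)"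

definition mix_product :: "nat \<Rightarrow> ('g \<Rightarrow> complex mat) \<Rightarrow> ('g \<times> real) list \<Rightarrow> complex mat" where
  "mix_product d \<rho> s = foldr (\<lambda>gp M. mix_factor d \<rho> gp * M) s (1\<^sub>m d)"

definition mixing_sequence :: "('g, 'b) monoid_scheme \<Rightarrow> nat \<Rightarrow> ('g \<Rightarrow> complex mat) \<Rightarrow> ('g \<times> real) list \<Rightarrow> bool" where
  "mixing_sequence G d \<rho> s \<longleftrightarrow>
     (\<forall>gp\<in>set s. fst gp \<in> carrier G \<and> 0 \<le> snd gp \<and> snd gp \<le> 1) \<and>
     mix_product d \<rho> s = 0\<^sub>m d d"

definition mixable :: "('g, 'b) monoid_scheme \<Rightarrow> nat \<Rightarrow> ('g \<Rightarrow> complex mat) \<Rightarrow> bool" where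
  "mixable G d \<rho> \<longleftrightarrow> (\<exists>s. mixing_sequence G d \<rho> s)"

definition potentially_mixable :: "('g, 'b) monoid_scheme \<Rightarrow> nat \<Rightarrow> ('g \<Rightarrow> complex mat) \<Rightarrow> bool" where
  "potentially_mixable G d \<rho> \<longleftrightarrow> (\<exists>a\<in>carrier G. eigenvalue (\<rho> a) (-1))"

end

theory Submission
  imports Defs
begin

lemma rep_one:
  assumes "group G" "is_rep G d \<rho>"
  shows "\<rho> \<one>\<^bsub>G\<^esub> = 1\<^sub>m d"
proof -
  interpret group G by fact
  let ?A = "\<rho> \<one>\<^bsub>G\<^esub>"
  have A: "?A \<in> carrier_mat d d" "invertible_mat ?A" using assms(2) unfolding is_rep_def by auto
  have AA: "?A = ?A * ?A" using assms(2) unfolding is_rep_def by (metis one_closed l_one)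
  obtain B where B: "?A * B = 1\<^sub>m (dim_row ?A)" "B * ?A = 1\<^sub>m (dim_row B)"
    using A(2) unfolding invertible_mat_def inverts_mat_def by auto
  have dB: "dim_col B = d" using B(1) A(1) by (metis carrier_matD(1) index_mult_mat(3) index_one_mat(3))
  have dB2: "dim_row B = d" using B(2) A(1) by (metis carrier_matD(2) index_mult_mat(3) index_one_mat(3))
  have Bc: "B \<in> carrier_mat d d" using dB dB2 by auto
  have "B * ?A = B * (?A * ?A)" using AA by simp
  also have "\<dots> = (B * ?A) * ?A" using Bc A(1) by (simp add: assoc_mult_mat)
  finally show ?thesis using B(2) dB2 A(1) by simp
qed

lemma rep_pow:
  assumes "group G" "is_rep G d \<rho>" "g \<in> carrier G"
  shows "\<rho> (g [^]\<^bsub>G\<^esub> (n::nat)) = \<rho> g ^\<^sub>m n"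
proof (induction n)
  case 0
  have "\<rho> g \<in> carrier_mat d d" using assms unfolding is_rep_def by auto
  then show ?case using rep_one[OF assms(1,2)] by simp
next
  case (Suc n)
  interpret group G by fact
  have "\<rho> (g [^]\<^bsub>G\<^esub> Suc n) = \<rho> (g [^]\<^bsub>G\<^esub> n \<otimes>\<^bsub>G\<^esub> g)" by simp
  also have "\<dots> = \<rho> (g [^]\<^bsub>G\<^esub> n) * \<rho> g" using assms unfolding is_rep_def by auto
  finally show ?case using Suc by simp
qed

lemma rep_ord:
  assumes "group G" "is_rep G d \<rho>" "g \<in> carrier G"
  shows "\<rho> g ^\<^sub>m (group.ord G g) = 1\<^sub>m d"
  using rep_pow[OF assms, of "group.ord G g"] rep_one[OF assms(1,2)]
  by (simp add: group.pow_ord_eq_1[OF assms(1,3)])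

lemma pow_mat_Suc_left:
  assumes "A \<in> carrier_mat n n"
  shows "A ^\<^sub>m Suc k = A * A ^\<^sub>m k"
  using assms
proof (induction k)
  case 0 then show ?case by simp
next
  case (Suc k)
  have "A ^\<^sub>m Suc (Suc k) = (A * A ^\<^sub>m k) * A" using Suc by simp
  also have "\<dots> = A * (A ^\<^sub>m k * A)" using Suc.prems by (simp add: assoc_mult_mat[of _ n n _ n _ n])
  finally show ?case by simp
qed

lemma transpose_pow:
  fixes A :: "'a :: comm_semiring_1 mat"
  assumes "A \<in> carrier_mat n n"
  shows "transpose_mat (A ^\<^sub>m k) = transpose_mat A ^\<^sub>m k"
proof (induction k)
  case 0 then show ?case using assms by simp
next
  case (Suc k)
  have "transpose_mat (A ^\<^sub>m Suc k) = transpose_mat A * transpose_mat (A ^\<^sub>m k)"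
    using assms transpose_mult[OF pow_carrier_mat[OF assms] assms] by simp
  also have "\<dots> = transpose_mat A ^\<^sub>m Suc k" using Suc assms
      pow_mat_Suc_left[OF transpose_carrier_mat[THEN iffD2, OF assms], of k] by simp
  finally show ?case .
qed

lemma odd_part:
  fixes n :: nat assumes "n > 0" shows "\<exists>m q. n = 2^m * q \<and> odd q"
  using assms
proof (induction n rule: less_induct)
  case (less n)
  show ?case
  proof (cases "odd n")
    case True then show ?thesis by (rule_tac x=0 in exI, auto)
  next
    case False
    then obtain h where h: "n = 2*h" by auto
    with less have "h < n" "h > 0" by auto
    from less.IH[OF this] obtain m q where "h = 2^m*q" "odd q" by auto
    then show ?thesis using h by (rule_tac x="Suc m" in exI, auto)
  qed
qed

lemma smult_mat_mult_vec:
  assumes "B \<in> carrier_mat n n" "v \<in> carrier_vec n"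
  shows "(k \<cdot>\<^sub>m B) *\<^sub>v v = (k::complex) \<cdot>\<^sub>v (B *\<^sub>v v)"
  using assms by (intro eq_vecI) auto

lemma kernel_lemma:
  assumes A: "A \<in> carrier_mat d d" and pw: "A ^\<^sub>m n = 1\<^sub>m d" and n: "n > 0"
    and p: "0 \<le> p" "p \<le> 1"
    and v: "v \<in> carrier_vec d" "v \<noteq> 0\<^sub>v d"
    and ker: "(complex_of_real (1-p) \<cdot>\<^sub>m 1\<^sub>m d + complex_of_real p \<cdot>\<^sub>m A) *\<^sub>v v = 0\<^sub>v d"
  shows "p = 1/2 \<and> A *\<^sub>v v = (-1) \<cdot>\<^sub>v v \<and> even n"
proof -
  have k2: "complex_of_real (1-p) \<cdot>\<^sub>v v + complex_of_real p \<cdot>\<^sub>v (A *\<^sub>v v) = 0\<^sub>v d"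
    using ker A v smult_mat_mult_vec[OF one_carrier_mat v(1)]
    by (simp add: add_mult_distrib_mat_vec[of _ d d] smult_mat_mult_vec)
  have e: "complex_of_real (1-p) * v$i + complex_of_real p * (A *\<^sub>v v)$i = 0" if "i < d" for i
  proof -
    have "(complex_of_real (1-p) \<cdot>\<^sub>v v + complex_of_real p \<cdot>\<^sub>v (A *\<^sub>v v)) $ i = 0"
      using k2 that by simp
    then show ?thesis using that A v by simp
  qed
  obtain i where i: "i < d" "v $ i \<noteq> 0" using v by (metis eq_vecI carrier_vecD index_zero_vec)
  have p0: "p \<noteq> 0"
  proof
    assume "p = 0" then have "v $ i = 0" using e[OF i(1)] by simp
    then show False using i by simp
  qed
  define c where "c = - (1-p)/p"
  have Av: "A *\<^sub>v v = complex_of_real c \<cdot>\<^sub>v v"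
  proof (intro eq_vecI)
    fix j assume "j < dim_vec (complex_of_real c \<cdot>\<^sub>v v)"
    then have j: "j < d" using v by simp
    have "complex_of_real p * (A *\<^sub>v v) $ j = - (complex_of_real (1-p) * v$j)"
      using e[OF j] by (simp add: eq_neg_iff_add_eq_0 add.commute)
    then have "(A *\<^sub>v v) $ j = - (complex_of_real (1-p) * v$j) / complex_of_real p"
      using p0 by (simp add: field_simps)
    also have "\<dots> = complex_of_real c * v $ j" unfolding c_def by (simp add: field_simps)
    finally show "(A *\<^sub>v v) $ j = (complex_of_real c \<cdot>\<^sub>v v) $ j" using j v by simp
  qed (use A v in simp)
  have ev: "eigenvector A v (complex_of_real c)" unfolding eigenvector_def using A v Av by simp
  have "A ^\<^sub>m n *\<^sub>v v = (complex_of_real c)^n \<cdot>\<^sub>v v" by (rule eigenvector_pow[OF A ev])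
  then have "v = (complex_of_real c)^n \<cdot>\<^sub>v v" using pw v by simp
  then have "v $ i = (complex_of_real c)^n * v $ i" using i v by (metis carrier_vecD index_smult_vec(1))
  then have "(complex_of_real c)^n = 1" using i by simp
  then have cn: "c ^ n = 1" by (metis of_real_eq_1_iff of_real_power)
  then have "\<bar>c\<bar> ^ n = 1" by (metis power_abs abs_one)
  then have "\<bar>c\<bar> = 1" using n by (metis abs_ge_zero power_eq_imp_eq_base power_one zero_le_one)
  moreover have "c \<le> 0" using p p0 unfolding c_def by (simp add: divide_nonpos_pos)
  ultimately have c1: "c = -1" by simp
  then have "p = 1/2" using p0 unfolding c_def by (simp add: field_simps)
  moreover have "even n" using cn c1 by (metis neg_one_odd_power one_neq_neg_one)
  ultimately show ?thesis using Av c1 by simp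
qed

lemma mix_factor_carrier:
  assumes "is_rep G d \<rho>" "fst gp \<in> carrier G"
  shows "mix_factor d \<rho> gp \<in> carrier_mat d d"
  using assms unfolding mix_factor_def is_rep_def by auto

lemma mix_product_Cons: "mix_product d \<rho> (x # s) = mix_factor d \<rho> x * mix_product d \<rho> s"
  by (simp add: mix_product_def)

lemma mix_product_Nil: "mix_product d \<rho> [] = 1\<^sub>m d"
  by (simp add: mix_product_def)

lemma mix_product_carrier:
  assumes "is_rep G d \<rho>" "\<forall>x\<in>set s. fst x \<in> carrier G"
  shows "mix_product d \<rho> s \<in> carrier_mat d d"
  using assms(2)
proof (induction s)
  case Nil then show ?case by (simp add: mix_product_Nil)
next
  case (Cons x s)
  have "mix_factor d \<rho> x \<in> carrier_mat d d" using Cons.prems mix_factor_carrier[OF assms(1)] by simp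
  moreover have "mix_product d \<rho> s \<in> carrier_mat d d" using Cons by simp
  ultimately show ?case by (metis mult_carrier_mat mix_product_Cons)
qed

lemma mix_product_snoc:
  assumes "is_rep G d \<rho>" "\<forall>x\<in>set s. fst x \<in> carrier G" "fst y \<in> carrier G"
  shows "mix_product d \<rho> (s @ [y]) = mix_product d \<rho> s * mix_factor d \<rho> y"
  using assms(2)
proof (induction s)
  case Nil then show ?case using mix_factor_carrier[OF assms(1,3)] by (simp add: mix_product_Nil mix_product_Cons)
next
  case (Cons x s)
  have c1: "mix_factor d \<rho> x \<in> carrier_mat d d" using Cons.prems mix_factor_carrier[OF assms(1)] by simp
  have c2: "mix_product d \<rho> s \<in> carrier_mat d d" using Cons.prems mix_product_carrier[OF assms(1)] by simp
  have c3: "mix_factor d \<rho> y \<in> carrier_mat d d" using mix_factor_carrier[OF assms(1,3)] .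
  show ?case using Cons c1 c2 c3 by (simp add: mix_product_Cons assoc_mult_mat[of _ d d _ d _ d])
qed

lemma half_factor:
  assumes "\<rho> g \<in> carrier_mat d d"
  shows "mix_factor d \<rho> (g, 1/2) = (1/2) \<cdot>\<^sub>m 1\<^sub>m d + (1/2) \<cdot>\<^sub>m \<rho> g"
  unfolding mix_factor_def by simp

lemma half_left:
  assumes A: "\<rho> g \<in> carrier_mat d d" and M: "M \<in> carrier_mat d d"
  shows "mix_factor d \<rho> (g, 1/2) * M = 0\<^sub>m d d \<longleftrightarrow> \<rho> g * M = (-1) \<cdot>\<^sub>m M"
proof -
  have eq: "mix_factor d \<rho> (g, 1/2) * M = (1/2) \<cdot>\<^sub>m M + (1/2) \<cdot>\<^sub>m (\<rho> g * M)"
    unfolding half_factor[of \<rho> g d, OF A] using A M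
    by (simp add: add_mult_distrib_mat[of _ d d] mult_smult_assoc_mat[of _ d d])
  show ?thesis
  proof
    assume h: "mix_factor d \<rho> (g, 1/2) * M = 0\<^sub>m d d"
    show "\<rho> g * M = (-1) \<cdot>\<^sub>m M"
    proof (rule eq_matI)
      fix i j assume ij: "i < dim_row ((-1) \<cdot>\<^sub>m M)" "j < dim_col ((-1) \<cdot>\<^sub>m M)"
      then have ij': "i < d" "j < d" using M by auto
      have "((1/2) \<cdot>\<^sub>m M + (1/2) \<cdot>\<^sub>m (\<rho> g * M)) $$ (i,j) = 0" using h eq ij' by simp
      then show "(\<rho> g * M) $$ (i,j) = ((-1) \<cdot>\<^sub>m M) $$ (i,j)" using ij' A M by (simp add: field_simps eq_neg_iff_add_eq_0 add.commute)
    qed (use A M in auto)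
  next
    assume h: "\<rho> g * M = (-1) \<cdot>\<^sub>m M"
    show "mix_factor d \<rho> (g, 1/2) * M = 0\<^sub>m d d" unfolding eq h
      by (rule eq_matI) (use M in auto)
  qed
qed

lemma half_right:
  assumes A: "\<rho> g \<in> carrier_mat d d" and M: "M \<in> carrier_mat d d"
  shows "M * mix_factor d \<rho> (g, 1/2) = 0\<^sub>m d d \<longleftrightarrow> M * \<rho> g = (-1) \<cdot>\<^sub>m M"
proof -
  have eq: "M * mix_factor d \<rho> (g, 1/2) = (1/2) \<cdot>\<^sub>m M + (1/2) \<cdot>\<^sub>m (M * \<rho> g)"
  proof -
    have "M * ((1/2) \<cdot>\<^sub>m 1\<^sub>m d + (1/2) \<cdot>\<^sub>m \<rho> g) = M * ((1/2) \<cdot>\<^sub>m 1\<^sub>m d) + M * ((1/2) \<cdot>\<^sub>m \<rho> g)"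
      by (rule mult_add_distrib_mat[OF M]) (use A in auto)
    also have "\<dots> = (1/2) \<cdot>\<^sub>m (M * 1\<^sub>m d) + (1/2) \<cdot>\<^sub>m (M * \<rho> g)"
      using mult_smult_distrib[OF M A] mult_smult_distrib[OF M one_carrier_mat] by simp
    finally show ?thesis unfolding half_factor[of \<rho> g d, OF A] using M by (simp add: right_mult_one_mat)
  qed
  show ?thesis
  proof
    assume h: "M * mix_factor d \<rho> (g, 1/2) = 0\<^sub>m d d"
    show "M * \<rho> g = (-1) \<cdot>\<^sub>m M"
    proof (rule eq_matI)
      fix i j assume ij: "i < dim_row ((-1) \<cdot>\<^sub>m M)" "j < dim_col ((-1) \<cdot>\<^sub>m M)"
      then have ij': "i < d" "j < d" using M by auto
      have "((1/2) \<cdot>\<^sub>m M + (1/2) \<cdot>\<^sub>m (M * \<rho> g)) $$ (i,j) = 0" using h eq ij' by simp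
      then show "(M * \<rho> g) $$ (i,j) = ((-1) \<cdot>\<^sub>m M) $$ (i,j)" using ij' A M by (simp add: field_simps eq_neg_iff_add_eq_0 add.commute)
    qed (use A M in auto)
  next
    assume h: "M * \<rho> g = (-1) \<cdot>\<^sub>m M"
    show "M * mix_factor d \<rho> (g, 1/2) = 0\<^sub>m d d" unfolding eq h
      by (rule eq_matI) (use M in auto)
  qed
qed

lemma smult_one_mat'[simp]: "(1::complex) \<cdot>\<^sub>m M = M"
  by (rule eq_matI) auto

lemma smult_smult_mat': "M \<in> carrier_mat d d \<Longrightarrow> a \<cdot>\<^sub>m (b \<cdot>\<^sub>m M) = (a * b :: complex) \<cdot>\<^sub>m M"
  by (rule eq_matI) auto

lemma pow_left:
  assumes A: "A \<in> carrier_mat d d" and M: "M \<in> carrier_mat d d" and h: "A * M = (-1::complex) \<cdot>\<^sub>m M"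
  shows "A ^\<^sub>m k * M = (-1)^k \<cdot>\<^sub>m M"
proof (induction k)
  case 0 then show ?case using A M by simp
next
  case (Suc k)
  have "A ^\<^sub>m Suc k * M = A ^\<^sub>m k * (A * M)" using A M by (simp add: assoc_mult_mat[of _ d d _ d _ d])
  also have "\<dots> = (-1) \<cdot>\<^sub>m (A ^\<^sub>m k * M)" unfolding h using A M by (simp add: mult_smult_distrib[of _ d d _ d])
  also have "\<dots> = (-1)^Suc k \<cdot>\<^sub>m M" unfolding Suc using M by (simp add: smult_smult_mat')
  finally show ?case .
qed

lemma pow_right:
  assumes A: "A \<in> carrier_mat d d" and M: "M \<in> carrier_mat d d" and h: "M * A = (-1::complex) \<cdot>\<^sub>m M"
  shows "M * A ^\<^sub>m k = (-1)^k \<cdot>\<^sub>m M"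
proof (induction k)
  case 0 then show ?case using A M by simp
next
  case (Suc k)
  have "M * A ^\<^sub>m Suc k = (M * A ^\<^sub>m k) * A" using A M by (simp add: assoc_mult_mat[of _ d d _ d _ d])
  also have "\<dots> = (-1)^k \<cdot>\<^sub>m (M * A)" unfolding Suc using A M by (simp add: mult_smult_assoc_mat[of _ d d _ d])
  also have "\<dots> = (-1)^Suc k \<cdot>\<^sub>m M" unfolding h using M by (simp add: smult_smult_mat')
  finally show ?case .
qed

lemma mixing_valid:
  assumes "mixing_sequence G d \<rho> s" "x \<in> set s"
  shows "fst x \<in> carrier G" "0 \<le> snd x" "snd x \<le> 1"
  using assms unfolding mixing_sequence_def by auto

lemma shorter_nonzero:
  assumes min: "\<forall>s'. mixing_sequence G d \<rho> s' \<longrightarrow> length s \<le> length s'"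
    and t: "\<forall>x\<in>set t. fst x \<in> carrier G \<and> 0 \<le> snd x \<and> snd x \<le> 1"
    and len: "length t < length s"
  shows "mix_product d \<rho> t \<noteq> 0\<^sub>m d d"
proof
  assume "mix_product d \<rho> t = 0\<^sub>m d d"
  then have "mixing_sequence G d \<rho> t" unfolding mixing_sequence_def using t by auto
  then have "length s \<le> length t" using min by blast
  then show False using len by simp
qed

lemma nonzero_entry:
  assumes "M \<in> carrier_mat d d" "M \<noteq> 0\<^sub>m d d"
  shows "\<exists>i j. i < d \<and> j < d \<and> M $$ (i,j) \<noteq> 0"
proof (rule ccontr)
  assume "\<not> ?thesis"
  then have "M = 0\<^sub>m d d" using assms(1) by (intro eq_matI) auto
  then show False using assms(2) by simp
qed

lemma mixing_nonempty:
  assumes "d > 0" "mixing_sequence G d \<rho> s"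
  shows "s \<noteq> []"
proof
  assume "s = []"
  then have "1\<^sub>m d = (0\<^sub>m d d :: complex mat)" using assms(2) unfolding mixing_sequence_def by (simp add: mix_product_Nil)
  then have "(1\<^sub>m d :: complex mat) $$ (0,0) = (0\<^sub>m d d :: complex mat) $$ (0,0)" by simp
  then show False using assms(1) by simp
qed

lemma first_step:
  assumes grp: "group G" and fin: "finite (carrier G)" and rep: "is_rep G d \<rho>" and d: "d > 0"
    and mix: "mixing_sequence G d \<rho> s"
    and min: "\<forall>s'. mixing_sequence G d \<rho> s' \<longrightarrow> length s \<le> length s'"
  shows "s \<noteq> [] \<and> snd (hd s) = 1/2 \<and> even (group.ord G (fst (hd s))) \<and> eigenvalue (\<rho> (fst (hd s))) (-1) \<and>
    (\<exists>a\<in>carrier G. (\<exists>m. group.ord G a = 2^m) \<and> mixing_sequence G d \<rho> ((a, 1/2) # tl s))"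
proof -
  have ne: "s \<noteq> []" by (rule mixing_nonempty[OF d mix])
  then obtain g p t where s: "s = (g,p) # t" by (metis list.exhaust prod.exhaust)
  have g: "g \<in> carrier G" and p: "0 \<le> p" "p \<le> 1" using mixing_valid[OF mix, of "(g,p)"] s by auto
  have tv: "\<forall>x\<in>set t. fst x \<in> carrier G \<and> 0 \<le> snd x \<and> snd x \<le> 1" using mix s unfolding mixing_sequence_def by auto
  define M where "M = mix_product d \<rho> t"
  have Mc: "M \<in> carrier_mat d d" unfolding M_def using tv mix_product_carrier[OF rep] by auto
  have M0: "M \<noteq> 0\<^sub>m d d" unfolding M_def by (rule shorter_nonzero[OF min tv]) (simp add: s)
  define F where "F = mix_factor d \<rho> (g,p)"
  have Fc: "F \<in> carrier_mat d d" unfolding F_def using mix_factor_carrier[OF rep] g by simp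
  have FM: "F * M = 0\<^sub>m d d" using mix unfolding mixing_sequence_def s F_def M_def by (simp add: mix_product_Cons)
  obtain i j where ij: "i < d" "j < d" "M $$ (i,j) \<noteq> 0" using nonzero_entry[OF Mc M0] by auto
  define v where "v = col M j"
  have vc: "v \<in> carrier_vec d" unfolding v_def carrier_vec_def using carrier_matD(1)[OF Mc] by simp
  have v0: "v \<noteq> 0\<^sub>v d"
  proof
    assume "v = 0\<^sub>v d"
    then have "v $ i = 0" using ij by simp
    moreover have "v $ i = M $$ (i,j)" unfolding v_def using ij carrier_matD[OF Mc] by simp
    ultimately show False using ij by simp
  qed
  have "col (F * M) j = F *\<^sub>v v" unfolding v_def by (rule col_mult2[OF Fc Mc ij(2)])
  moreover have "col (F * M) j = 0\<^sub>v d" unfolding FM using ij(2) by simp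
  ultimately have Fv: "F *\<^sub>v v = 0\<^sub>v d" by simp
  have Ac: "\<rho> g \<in> carrier_mat d d" using rep g unfolding is_rep_def by auto
  interpret group G by fact
  have n: "ord g > 0" using ord_ge_1[OF fin g] by simp
  have pw: "\<rho> g ^\<^sub>m ord g = 1\<^sub>m d" by (rule rep_ord[OF grp rep g])
  have Fdef: "F = complex_of_real (1-p) \<cdot>\<^sub>m 1\<^sub>m d + complex_of_real p \<cdot>\<^sub>m \<rho> g" unfolding F_def mix_factor_def by simp
  from kernel_lemma[OF Ac pw n p vc v0 Fv[unfolded Fdef]]
  have p2: "p = 1/2" and ev: "\<rho> g *\<^sub>v v = (-1) \<cdot>\<^sub>v v" and ev2: "even (ord g)" by auto
  have eig: "eigenvalue (\<rho> g) (-1)" unfolding eigenvalue_def eigenvector_def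
    using vc v0 ev Ac by auto
  obtain m q where mq: "ord g = 2^m * q" "odd q" using odd_part[OF n] by auto
  define a where "a = g [^]\<^bsub>G\<^esub> q"
  have a: "a \<in> carrier G" unfolding a_def using g by simp
  have qd: "q dvd ord g" using mq(1) by simp
  have q0: "q \<noteq> 0" using mq(2) by (metis even_zero)
  have "ord a = ord g div q" unfolding a_def by (rule ord_pow[OF g qd q0])
  then have orda: "ord a = 2^m" using q0 by (simp add: mq(1))
  have h1: "\<rho> g * M = (-1) \<cdot>\<^sub>m M" using half_left[of \<rho> g d M, OF Ac Mc] FM unfolding F_def p2 by simp
  have "\<rho> a = \<rho> g ^\<^sub>m q" unfolding a_def by (rule rep_pow[OF grp rep g])
  then have h2: "\<rho> a * M = (-1) \<cdot>\<^sub>m M" using pow_left[OF Ac Mc h1, of q] mq(2) by simp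
  have Aa: "\<rho> a \<in> carrier_mat d d" using rep a unfolding is_rep_def by auto
  have "mix_factor d \<rho> (a, 1/2) * M = 0\<^sub>m d d" using half_left[of \<rho> a d M, OF Aa Mc] h2 by simp
  then have "mixing_sequence G d \<rho> ((a, 1/2) # t)" using tv a unfolding mixing_sequence_def M_def
    by (simp add: mix_product_Cons)
  then show ?thesis using ne s p2 ev2 eig a orda by auto
qed

lemma transpose_smult': "transpose_mat (k \<cdot>\<^sub>m A) = k \<cdot>\<^sub>m transpose_mat A"
  by (rule eq_matI) auto

lemma last_step:
  assumes grp: "group G" and fin: "finite (carrier G)" and rep: "is_rep G d \<rho>" and d: "d > 0"
    and mix: "mixing_sequence G d \<rho> s"
    and min: "\<forall>s'. mixing_sequence G d \<rho> s' \<longrightarrow> length s \<le> length s'"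
  shows "s \<noteq> [] \<and> snd (last s) = 1/2 \<and> even (group.ord G (fst (last s))) \<and>
    (\<exists>b\<in>carrier G. (\<exists>m. group.ord G b = 2^m) \<and> mixing_sequence G d \<rho> (butlast s @ [(b, 1/2)]))"
proof -
  have ne: "s \<noteq> []" by (rule mixing_nonempty[OF d mix])
  then obtain g p t where s: "s = t @ [(g,p)]" by (metis rev_exhaust prod.exhaust)
  have g: "g \<in> carrier G" and p: "0 \<le> p" "p \<le> 1" using mixing_valid[OF mix, of "(g,p)"] s by auto
  have tv: "\<forall>x\<in>set t. fst x \<in> carrier G \<and> 0 \<le> snd x \<and> snd x \<le> 1" using mix s unfolding mixing_sequence_def by auto
  have tv': "\<forall>x\<in>set t. fst x \<in> carrier G" using tv by blast
  define M where "M = mix_product d \<rho> t"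
  have Mc: "M \<in> carrier_mat d d" unfolding M_def using tv mix_product_carrier[OF rep] by auto
  have M0: "M \<noteq> 0\<^sub>m d d" unfolding M_def by (rule shorter_nonzero[OF min tv]) (simp add: s)
  define F where "F = mix_factor d \<rho> (g,p)"
  have Fc: "F \<in> carrier_mat d d" unfolding F_def using mix_factor_carrier[OF rep] g by simp
  have MF: "M * F = 0\<^sub>m d d" using mix unfolding mixing_sequence_def s F_def M_def
    using mix_product_snoc[OF rep tv', of "(g,p)"] g by simp
  obtain i j where ij: "i < d" "j < d" "M $$ (i,j) \<noteq> 0" using nonzero_entry[OF Mc M0] by auto
  define v where "v = row M i"
  have vc: "v \<in> carrier_vec d" unfolding v_def carrier_vec_def using carrier_matD(2)[OF Mc] by simp
  have v0: "v \<noteq> 0\<^sub>v d"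
  proof
    assume "v = 0\<^sub>v d"
    then have "v $ j = 0" using ij by simp
    moreover have "v $ j = M $$ (i,j)" unfolding v_def using ij carrier_matD[OF Mc] by simp
    ultimately show False using ij by simp
  qed
  have FTc: "transpose_mat F \<in> carrier_mat d d" using Fc by simp
  have MTc: "transpose_mat M \<in> carrier_mat d d" using Mc by simp
  have "col (transpose_mat F * transpose_mat M) i = transpose_mat F *\<^sub>v col (transpose_mat M) i"
    by (rule col_mult2[OF FTc MTc ij(1)])
  moreover have "col (transpose_mat M) i = v" unfolding v_def using ij(1) carrier_matD[OF Mc] by simp
  moreover have "transpose_mat F * transpose_mat M = transpose_mat (M * F)"
    using transpose_mult[OF Mc Fc] by simp
  moreover have "col (transpose_mat (M * F)) i = 0\<^sub>v d" unfolding MF using ij(1) by simp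
  ultimately have Fv: "transpose_mat F *\<^sub>v v = 0\<^sub>v d" by simp
  have Ac: "\<rho> g \<in> carrier_mat d d" using rep g unfolding is_rep_def by auto
  have ATc: "transpose_mat (\<rho> g) \<in> carrier_mat d d" using Ac by simp
  interpret group G by fact
  have n: "ord g > 0" using ord_ge_1[OF fin g] by simp
  have pw: "transpose_mat (\<rho> g) ^\<^sub>m ord g = 1\<^sub>m d"
    using transpose_pow[OF Ac, of "ord g"] rep_ord[OF grp rep g] by simp
  have Fdef: "transpose_mat F = complex_of_real (1-p) \<cdot>\<^sub>m 1\<^sub>m d + complex_of_real p \<cdot>\<^sub>m transpose_mat (\<rho> g)"
    unfolding F_def mix_factor_def using Ac
    by (simp add: transpose_add[of _ d d] transpose_smult')
  from kernel_lemma[OF ATc pw n p vc v0 Fv[unfolded Fdef]]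
  have p2: "p = 1/2" and ev2: "even (ord g)" by auto
  obtain m q where mq: "ord g = 2^m * q" "odd q" using odd_part[OF n] by auto
  define b where "b = g [^]\<^bsub>G\<^esub> q"
  have b: "b \<in> carrier G" unfolding b_def using g by simp
  have qd: "q dvd ord g" using mq(1) by simp
  have q0: "q \<noteq> 0" using mq(2) by (metis even_zero)
  have "ord b = ord g div q" unfolding b_def by (rule ord_pow[OF g qd q0])
  then have ordb: "ord b = 2^m" using q0 by (simp add: mq(1))
  have h1: "M * \<rho> g = (-1) \<cdot>\<^sub>m M" using half_right[of \<rho> g d M, OF Ac Mc] MF unfolding F_def p2 by simp
  have "\<rho> b = \<rho> g ^\<^sub>m q" unfolding b_def by (rule rep_pow[OF grp rep g])
  then have h2: "M * \<rho> b = (-1) \<cdot>\<^sub>m M" using pow_right[OF Ac Mc h1, of q] mq(2) by simp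
  have Ab: "\<rho> b \<in> carrier_mat d d" using rep b unfolding is_rep_def by auto
  have "M * mix_factor d \<rho> (b, 1/2) = 0\<^sub>m d d" using half_right[of \<rho> b d M, OF Ab Mc] h2 by simp
  moreover have "mix_product d \<rho> (t @ [(b, 1/2)]) = M * mix_factor d \<rho> (b, 1/2)"
    unfolding M_def using mix_product_snoc[OF rep tv', of "(b,1/2)"] b by simp
  ultimately have "mixing_sequence G d \<rho> (t @ [(b, 1/2)])" using tv b unfolding mixing_sequence_def
    by simp
  then show ?thesis using ne s p2 ev2 b ordb by auto
qed

theorem mainTheorem13:
  fixes G :: "('g, 'b) monoid_scheme" and d :: nat and \<rho> :: "'g \<Rightarrow> complex mat"
  assumes "group G" and "finite (carrier G)"
    and "irreducible_rep G d \<rho>" and "mixable G d \<rho>"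
  shows "potentially_mixable G d \<rho> \<and>
    (\<forall>s. mixing_sequence G d \<rho> s \<and>
         (\<forall>s'. mixing_sequence G d \<rho> s' \<longrightarrow> length s \<le> length s') \<longrightarrow>
       (let k = length s in
          snd (s ! 0) = 1/2 \<and> snd (s ! (k - 1)) = 1/2 \<and>
          even (group.ord G (fst (s ! 0))) \<and> even (group.ord G (fst (s ! (k - 1)))) \<and>
          (\<exists>a\<in>carrier G. \<exists>b\<in>carrier G. (\<exists>m. group.ord G a = 2 ^ m) \<and> (\<exists>n. group.ord G b = 2 ^ n) \<and>
             (\<exists>s'. length s' = k \<and> s' ! 0 = (a, 1/2) \<and> s' ! (k - 1) = (b, 1/2) \<and>
                   (\<forall>i. 0 < i \<and> i < k - 1 \<longrightarrow> s' ! i = s ! i) \<and>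
                   mixing_sequence G d \<rho> s'))))"
proof -
  have rep: "is_rep G d \<rho>" and d: "d > 0" using assms(3) unfolding irreducible_rep_def by auto
  obtain s0 where "mixing_sequence G d \<rho> s0" using assms(4) unfolding mixable_def by auto
  then obtain s1 where s1: "mixing_sequence G d \<rho> s1"
    and s1min: "\<forall>s'. mixing_sequence G d \<rho> s' \<longrightarrow> length s1 \<le> length s'"
    using ex_has_least_nat[of "mixing_sequence G d \<rho>" s0 length] by blast
  from first_step[OF assms(1,2) rep d s1 s1min]
  have "s1 \<noteq> []" "eigenvalue (\<rho> (fst (hd s1))) (-1)" by auto
  moreover have "fst (hd s1) \<in> carrier G" using mixing_valid[OF s1, of "hd s1"] \<open>s1 \<noteq> []\<close> by simp
  ultimately have pm: "potentially_mixable G d \<rho>" unfolding potentially_mixable_def by blast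
  have rest: "let k = length s in
          snd (s ! 0) = 1/2 \<and> snd (s ! (k - 1)) = 1/2 \<and>
          even (group.ord G (fst (s ! 0))) \<and> even (group.ord G (fst (s ! (k - 1)))) \<and>
          (\<exists>a\<in>carrier G. \<exists>b\<in>carrier G. (\<exists>m. group.ord G a = 2 ^ m) \<and> (\<exists>n. group.ord G b = 2 ^ n) \<and>
             (\<exists>s'. length s' = k \<and> s' ! 0 = (a, 1/2) \<and> s' ! (k - 1) = (b, 1/2) \<and>
                   (\<forall>i. 0 < i \<and> i < k - 1 \<longrightarrow> s' ! i = s ! i) \<and>
                   mixing_sequence G d \<rho> s'))"
    if smix: "mixing_sequence G d \<rho> s" and smin: "\<forall>s'. mixing_sequence G d \<rho> s' \<longrightarrow> length s \<le> length s'" for s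
  proof -
    define k where "k = length s"
    from first_step[OF assms(1,2) rep d smix smin] obtain a where
      ne: "s \<noteq> []" and f1: "snd (hd s) = 1/2" and f2: "even (group.ord G (fst (hd s)))"
      and a: "a \<in> carrier G" "\<exists>m. group.ord G a = 2^m"
      and s1mix: "mixing_sequence G d \<rho> ((a, 1/2) # tl s)" by blast
    from last_step[OF assms(1,2) rep d smix smin]
    have l1: "snd (last s) = 1/2" and l2: "even (group.ord G (fst (last s)))" by auto
    have k1: "k \<ge> 1" using ne unfolding k_def by (cases s) auto
    have h0: "s ! 0 = hd s" using ne by (simp add: hd_conv_nth)
    have hk: "s ! (k - 1) = last s" using ne unfolding k_def by (simp add: last_conv_nth)
    define s1 where "s1 = (a, 1/2) # tl s"
    have len1: "length s1 = k" unfolding s1_def k_def using ne by (cases s) auto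
    have s1min: "\<forall>s'. mixing_sequence G d \<rho> s' \<longrightarrow> length s1 \<le> length s'" using smin len1 unfolding k_def by simp
    have ex: "\<exists>a\<in>carrier G. \<exists>b\<in>carrier G. (\<exists>m. group.ord G a = 2 ^ m) \<and> (\<exists>n. group.ord G b = 2 ^ n) \<and>
             (\<exists>s'. length s' = k \<and> s' ! 0 = (a, 1/2) \<and> s' ! (k - 1) = (b, 1/2) \<and>
                   (\<forall>i. 0 < i \<and> i < k - 1 \<longrightarrow> s' ! i = s ! i) \<and>
                   mixing_sequence G d \<rho> s')"
    proof (cases "k = 1")
      case True
      have "s1 ! 0 = (a, 1/2)" unfolding s1_def by simp
      then show ?thesis using a s1mix len1 True unfolding s1_def[symmetric]
        by (intro bexI[OF _ a(1)] bexI[OF _ a(1)]) auto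
    next
      case False
      then have k2: "k \<ge> 2" using k1 by simp
      from last_step[OF assms(1,2) rep d s1mix[folded s1_def] s1min] obtain b where
        b: "b \<in> carrier G" "\<exists>m. group.ord G b = 2^m" and
        s2mix: "mixing_sequence G d \<rho> (butlast s1 @ [(b, 1/2)])" by blast
      define s2 where "s2 = butlast s1 @ [(b, 1/2)]"
      have lb: "length (butlast s1) = k - 1" using len1 by simp
      have len2: "length s2 = k" unfolding s2_def using lb k1 by simp
      have s20: "s2 ! 0 = (a, 1/2)"
      proof -
        have "s2 ! 0 = butlast s1 ! 0" unfolding s2_def using lb k2 by (simp add: nth_append)
        also have "\<dots> = s1 ! 0" using lb k2 by (simp add: nth_butlast)
        finally show ?thesis unfolding s1_def by simp
      qed
      have s2k: "s2 ! (k - 1) = (b, 1/2)" unfolding s2_def using lb by (simp add: nth_append)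
      have mid: "s2 ! i = s ! i" if "0 < i" "i < k - 1" for i
      proof -
        have "s2 ! i = butlast s1 ! i" unfolding s2_def using lb that by (simp add: nth_append)
        also have "\<dots> = s1 ! i" using lb that by (simp add: nth_butlast)
        also have "\<dots> = tl s ! (i - 1)" unfolding s1_def using that by (simp add: nth_Cons')
        also have "\<dots> = s ! i" using that ne by (cases s) auto
        finally show ?thesis .
      qed
      show ?thesis using a b len2 s20 s2k mid s2mix[folded s2_def] by blast
    qed
    show ?thesis unfolding Let_def k_def[symmetric] using f1 f2 l1 l2 h0 hk ex by simp
  qed
  show ?thesis using pm rest by blast
qed

end
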